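(* Let $\varepsilon>0$ and $\vec{\delta}\in\mathbb{R}^d$ with $\|\vec{\delta}\|\le\varepsilon$. There is $n=\tilde{O}(d/\varepsilon^2)$ such that, if $\vec{y}_1,\dots,\vec{y}_n$ are i.i.d. $\mathcal{N}(0,I)$ in $\mathbb{R}^d$, $z_1,\dots,z_n$ are i.i.d. uniform Rademacher random variables independent of the $\vec{y}_i$, and $\hat{\Sigma}_2=\frac1n\sum_{i=1}^n z_i(\vec{y}_i\vec{\delta}^T+\vec{\delta}\vec{y}_i^T)$, then for any unit vector $\hat{\vec{v}}\in\mathbb{R}^d$, $$\mathbb{P}\left(|\hat{\vec{v}}^T\hat{\Sigma}_2\hat{\vec{v}}|>2\varepsilon^2\right)\le\mathrm{poly}\left(\frac{\varepsilon^2}{d}\right).$$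
   Context: $\tilde{O}$ hides polylogarithmic factors; $\mathrm{poly}(\varepsilon^2/d)$ denotes a quantity bounded by a polynomial in $\varepsilon^2/d$. *)

theory Defs
  imports "HOL-Probability.Probability"
begin

text \<open>Vectors in R^d are represented as functions nat => real, only indices j < d matter.
  A sample is a pair (Y, Z): Y i j is the j-th coordinate of the Gaussian vector y_i,
  Z i is the Rademacher sign z_i (i < n).\<close>

definition std_gaussian :: "real measure" where
  "std_gaussian = density lborel std_normal_density"

definition rademacher :: "real measure" where
  "rademacher = measure_pmf (pmf_of_set {-1, 1})"

definition sample_space :: "nat \<Rightarrow> nat \<Rightarrow> ((nat \<Rightarrow> nat \<Rightarrow> real) \<times> (nat \<Rightarrow> real)) measure" where
  "sample_space d n =
     (PiM {..<n} (\<lambda>_. PiM {..<d} (\<lambda>_. std_gaussian))) \<Otimes>\<^sub>M (PiM {..<n} (\<lambda>_. rademacher))"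

definition Sigma2 :: "nat \<Rightarrow> (nat \<Rightarrow> real) \<Rightarrow> (nat \<Rightarrow> nat \<Rightarrow> real) \<times> (nat \<Rightarrow> real)
                       \<Rightarrow> nat \<Rightarrow> nat \<Rightarrow> real" where
  "Sigma2 n \<delta> \<omega> j k = (1 / real n) * (\<Sum>i<n. snd \<omega> i * (fst \<omega> i j * \<delta> k + \<delta> j * fst \<omega> i k))"

definition quadform :: "nat \<Rightarrow> (nat \<Rightarrow> real) \<Rightarrow> (nat \<Rightarrow> nat \<Rightarrow> real) \<Rightarrow> real" where
  "quadform d v A = (\<Sum>j<d. \<Sum>k<d. v j * A j k * v k)"

definition vnorm :: "nat \<Rightarrow> (nat \<Rightarrow> real) \<Rightarrow> real" where
  "vnorm d v = sqrt (\<Sum>j<d. (v j)\<^sup>2)"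

end

theory Submission
  imports Defs
begin

lemma std_normal_nn_integral: "(\<integral>\<^sup>+x. ennreal (std_normal_density x) \<partial>lborel) = 1"
proof -
  have "emeasure (density lborel std_normal_density) (space (density lborel std_normal_density)) = 1"
    using prob_space.emeasure_space_1[OF prob_space_normal_density[of 1 0]] by simp
  thus ?thesis by (simp add: emeasure_density)
qed

lemma gauss_mgf: "(\<integral>\<^sup>+x. ennreal (exp (t*x)) \<partial>std_gaussian) = ennreal (exp (t^2/2))"
proof -
  have eq: "std_normal_density x * exp (t*x) = exp (t^2/2) * std_normal_density (x - t)" for x
    by (simp add: std_normal_density_def exp_add[symmetric] power2_eq_square field_simps)
  have "(\<integral>\<^sup>+x. ennreal (exp (t*x)) \<partial>std_gaussian) =
        (\<integral>\<^sup>+x. ennreal (std_normal_density x) * ennreal (exp (t*x)) \<partial>lborel)"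
    unfolding std_gaussian_def by (subst nn_integral_density) auto
  also have "\<dots> = (\<integral>\<^sup>+x. ennreal (exp (t^2/2)) * ennreal (std_normal_density (x - t)) \<partial>lborel)"
    by (simp add: ennreal_mult'[symmetric] eq)
  also have "\<dots> = ennreal (exp (t^2/2)) * (\<integral>\<^sup>+x. ennreal (std_normal_density (x - t)) \<partial>lborel)"
    by (rule nn_integral_cmult) auto
  also have "(\<integral>\<^sup>+x. ennreal (std_normal_density (x - t)) \<partial>lborel) = 1"
    using nn_integral_real_affine[of "\<lambda>x. ennreal (std_normal_density (x - t))" 1 t]
    by (simp add: std_normal_nn_integral)
  finally show ?thesis by simp
qed

lemma prob_gauss: "prob_space std_gaussian"
  unfolding std_gaussian_def by (rule prob_space_normal_density) simp

lemma prob_rad: "prob_space rademacher"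
  unfolding rademacher_def by (rule prob_space_measure_pmf)

lemma sets_gauss[measurable_cong, simp]: "sets std_gaussian = sets borel"
  unfolding std_gaussian_def by simp

lemma sets_rad[simp]: "sets rademacher = UNIV"
  unfolding rademacher_def by simp

lemma sets_rad': "sets rademacher = sets (count_space UNIV)"
  by simp

lemma rad_meas: "f \<in> rademacher \<rightarrow>\<^sub>M (borel :: 'b::topological_space measure)"
  by (subst measurable_cong_sets[OF sets_rad' refl]) simp

lemma meas_X[measurable]: "(\<lambda>\<omega>. \<Sum>i<n. snd \<omega> i * (\<Sum>j<d. v j * fst \<omega> i j))
   \<in> borel_measurable (PiM {..<n} (\<lambda>_. PiM {..<d} (\<lambda>_. std_gaussian)) \<Otimes>\<^sub>M PiM {..<n} (\<lambda>_. rademacher))"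
proof -
  have r: "(\<lambda>x::real. x) \<in> rademacher \<rightarrow>\<^sub>M borel"
    by (subst measurable_cong_sets[OF sets_rad' refl]) simp
  have s: "(\<lambda>\<omega>. snd \<omega> i) \<in> borel_measurable (PiM {..<n} (\<lambda>_. PiM {..<d} (\<lambda>_. std_gaussian)) \<Otimes>\<^sub>M PiM {..<n} (\<lambda>_. rademacher))"
    if "i < n" for i
    using measurable_compose[OF measurable_compose[OF measurable_snd measurable_component_singleton[of i "{..<n}"]] r] that
    by simp
  have g: "(\<lambda>x::real. x) \<in> std_gaussian \<rightarrow>\<^sub>M borel"
    by (subst measurable_cong_sets[OF sets_gauss refl]) simp
  have f: "(\<lambda>\<omega>. fst \<omega> i j) \<in> borel_measurable (PiM {..<n} (\<lambda>_. PiM {..<d} (\<lambda>_. std_gaussian)) \<Otimes>\<^sub>M PiM {..<n} (\<lambda>_. rademacher))"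
    if "i < n" "j < d" for i j
    using measurable_compose[OF measurable_compose[OF measurable_compose[OF measurable_fst measurable_component_singleton[of i "{..<n}"]] measurable_component_singleton[of j "{..<d}"]] g] that
    by simp
  show ?thesis
    by (intro borel_measurable_sum borel_measurable_times borel_measurable_const s f) auto
qed

lemma prob_sample: "prob_space (sample_space d n)"
  unfolding sample_space_def
  by (intro prob_space_pair prob_space_PiM prob_gauss prob_rad)

lemma psf_gauss: "product_sigma_finite (\<lambda>_. std_gaussian)"
  unfolding product_sigma_finite_def using prob_space_imp_sigma_finite[OF prob_gauss] by simp

lemma psf_rad: "product_sigma_finite (\<lambda>_. rademacher)"
  unfolding product_sigma_finite_def using prob_space_imp_sigma_finite[OF prob_rad] by simp

lemma psf_gauss2: "product_sigma_finite (\<lambda>_. PiM {..<d} (\<lambda>_. std_gaussian))"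
  unfolding product_sigma_finite_def
  using prob_space_imp_sigma_finite[OF prob_space_PiM[OF prob_gauss]] by blast

lemma inner_mgf:
  fixes d :: nat
  shows "(\<integral>\<^sup>+y. (\<Prod>j<d. ennreal (exp (c * v j * y j))) \<partial>PiM {..<d} (\<lambda>_. std_gaussian))
    = ennreal (exp (c^2 * (\<Sum>j<d. (v j)^2) / 2))"
proof -
  have "(\<integral>\<^sup>+y. (\<Prod>j<d. ennreal (exp (c * v j * y j))) \<partial>PiM {..<d} (\<lambda>_. std_gaussian))
      = (\<Prod>j<d. \<integral>\<^sup>+x. ennreal (exp (c * v j * x)) \<partial>std_gaussian)"
    by (rule product_sigma_finite.product_nn_integral_prod[OF psf_gauss]) auto
  also have "\<dots> = (\<Prod>j<d. ennreal (exp ((c * v j)^2/2)))"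
    by (simp add: gauss_mgf)
  also have "\<dots> = ennreal (\<Prod>j<d. exp ((c * v j)^2/2))"
    by (simp add: prod_ennreal)
  also have "(\<Prod>j<d. exp ((c * v j)^2/2)) = exp (c^2 * (\<Sum>j<d. (v j)^2) / 2)"
    by (simp add: exp_sum[symmetric] sum_divide_distrib sum_distrib_left power_mult_distrib)
  finally show ?thesis .
qed

lemma rad_int: "(\<integral>\<^sup>+z. ennreal (exp ((l * z)^2/2)) \<partial>rademacher) = ennreal (exp (l^2/2))"
proof -
  have "(\<integral>\<^sup>+z. ennreal (exp ((l * z)^2/2)) \<partial>rademacher) = (\<integral>\<^sup>+z. ennreal (exp (l^2/2)) \<partial>rademacher)"
    unfolding rademacher_def
    by (rule nn_integral_cong_AE) (auto simp: AE_measure_pmf_iff power_mult_distrib)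
  also have "\<dots> = ennreal (exp (l^2/2))"
    using prob_space.emeasure_space_1[OF prob_rad] by simp
  finally show ?thesis .
qed

lemma pair_sf: "pair_sigma_finite (PiM {..<n} (\<lambda>_. PiM {..<d} (\<lambda>_. std_gaussian))) (PiM {..<n} (\<lambda>_. rademacher))"
  unfolding pair_sigma_finite_def
  by (intro conjI prob_space_imp_sigma_finite prob_space_PiM prob_gauss prob_rad)

lemma mgf:
  fixes d n :: nat and v :: "nat \<Rightarrow> real"
  assumes S: "(\<Sum>j<d. (v j)^2) = 1"
  shows "(\<integral>\<^sup>+\<omega>. ennreal (exp (l * (\<Sum>i<n. snd \<omega> i * (\<Sum>j<d. v j * fst \<omega> i j)))) \<partial>sample_space d n)
         = ennreal (exp (real n * l^2 / 2))"
proof -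
  let ?M1 = "PiM {..<n} (\<lambda>_. PiM {..<d} (\<lambda>_. std_gaussian))"
  let ?M2 = "PiM {..<n} (\<lambda>_. rademacher)"
  have eq: "ennreal (exp (l * (\<Sum>i<n. z i * (\<Sum>j<d. v j * Y i j))))
      = (\<Prod>i<n. \<Prod>j<d. ennreal (exp ((l * z i) * v j * Y i j)))" for z Y
    by (simp add: prod_ennreal exp_sum[symmetric] sum_distrib_left algebra_simps prod_nonneg)
  have "(\<integral>\<^sup>+\<omega>. ennreal (exp (l * (\<Sum>i<n. snd \<omega> i * (\<Sum>j<d. v j * fst \<omega> i j)))) \<partial>sample_space d n)
      = (\<integral>\<^sup>+z. \<integral>\<^sup>+Y. ennreal (exp (l * (\<Sum>i<n. z i * (\<Sum>j<d. v j * Y i j)))) \<partial>?M1 \<partial>?M2)"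
    unfolding sample_space_def
    by (subst pair_sigma_finite.nn_integral_snd[OF pair_sf, symmetric]) (auto simp del: sets_rad)
  also have "\<dots> = (\<integral>\<^sup>+z. (\<Prod>i<n. ennreal (exp ((l * z i)^2/2))) \<partial>?M2)"
  proof (rule nn_integral_cong)
    fix z
    have "(\<integral>\<^sup>+Y. ennreal (exp (l * (\<Sum>i<n. z i * (\<Sum>j<d. v j * Y i j)))) \<partial>?M1)
       = (\<integral>\<^sup>+Y. (\<Prod>i<n. (\<lambda>i y. \<Prod>j<d. ennreal (exp ((l * z i) * v j * y j))) i (Y i)) \<partial>?M1)"
      by (simp add: eq)
    also have "\<dots> = (\<Prod>i<n. \<integral>\<^sup>+y. (\<Prod>j<d. ennreal (exp ((l * z i) * v j * y j))) \<partial>PiM {..<d} (\<lambda>_. std_gaussian))"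
      by (rule product_sigma_finite.product_nn_integral_prod[OF psf_gauss2]) auto
    also have "\<dots> = (\<Prod>i<n. ennreal (exp ((l * z i)^2/2)))"
      by (simp add: inner_mgf S)
    finally show "(\<integral>\<^sup>+Y. ennreal (exp (l * (\<Sum>i<n. z i * (\<Sum>j<d. v j * Y i j)))) \<partial>?M1)
       = (\<Prod>i<n. ennreal (exp ((l * z i)^2/2)))" .
  qed
  also have "\<dots> = (\<Prod>i<n. \<integral>\<^sup>+z. ennreal (exp ((l * z)^2/2)) \<partial>rademacher)"
    by (rule product_sigma_finite.product_nn_integral_prod[OF psf_rad]) (auto intro: rad_meas)
  also have "\<dots> = ennreal (exp (real n * l^2 / 2))"
    by (simp add: rad_int ennreal_power exp_of_nat_mult[symmetric] mult.assoc)
  finally show ?thesis .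
qed

lemma tail:
  fixes d n :: nat and v :: "nat \<Rightarrow> real" and e :: real
  assumes S: "(\<Sum>j<d. (v j)^2) = 1" and e: "e > 0"
  shows "measure (sample_space d n)
     {\<omega> \<in> space (sample_space d n). \<bar>\<Sum>i<n. snd \<omega> i * (\<Sum>j<d. v j * fst \<omega> i j)\<bar> > real n * e}
     \<le> 2 * exp (- (real n * e^2 / 2))"
proof -
  let ?M = "sample_space d n"
  let ?X = "\<lambda>\<omega>. \<Sum>i<n. snd \<omega> i * (\<Sum>j<d. v j * fst \<omega> i j)"
  let ?E = "{\<omega> \<in> space ?M. \<bar>?X \<omega>\<bar> > real n * e}"
  interpret prob_space ?M by (rule prob_sample)
  have Xm[measurable]: "?X \<in> borel_measurable ?M" unfolding sample_space_def by (rule meas_X)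
  have Em: "?E \<in> sets ?M" by measurable
  have pt: "indicator ?E \<omega> \<le> ennreal ((exp (e * ?X \<omega>) + exp (- e * ?X \<omega>)) * exp (- (real n * e^2)))" for \<omega>
  proof (cases "\<omega> \<in> ?E")
    case True
    hence "\<bar>?X \<omega>\<bar> > real n * e" by simp
    hence "e * \<bar>?X \<omega>\<bar> \<ge> real n * e^2" using e
      by (simp add: power2_eq_square)
    hence "exp (real n * e^2) \<le> exp (e * \<bar>?X \<omega>\<bar>)" by simp
    also have "\<dots> \<le> exp (e * ?X \<omega>) + exp (- e * ?X \<omega>)"
      by (cases "?X \<omega> \<ge> 0") (auto simp: abs_if add_increasing add_increasing2)
    finally have "1 \<le> (exp (e * ?X \<omega>) + exp (- e * ?X \<omega>)) * exp (- (real n * e^2))"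
      by (simp add: exp_minus field_simps)
    thus ?thesis using True by simp
  qed auto
  have "emeasure ?M ?E = (\<integral>\<^sup>+\<omega>. indicator ?E \<omega> \<partial>?M)" using Em by simp
  also have "\<dots> \<le> (\<integral>\<^sup>+\<omega>. (ennreal (exp (e * ?X \<omega>)) + ennreal (exp (- e * ?X \<omega>))) * ennreal (exp (- (real n * e^2))) \<partial>?M)"
    by (rule nn_integral_mono) (use pt in \<open>simp add: ennreal_mult'[symmetric] ennreal_plus[symmetric] del: ennreal_plus\<close>)
  also have "\<dots> = ((\<integral>\<^sup>+\<omega>. ennreal (exp (e * ?X \<omega>)) \<partial>?M) + (\<integral>\<^sup>+\<omega>. ennreal (exp (- e * ?X \<omega>)) \<partial>?M)) * ennreal (exp (- (real n * e^2)))"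
    by (simp add: nn_integral_multc nn_integral_add)
  also have "\<dots> = (ennreal (exp (real n * e^2 / 2)) + ennreal (exp (real n * e^2 / 2))) * ennreal (exp (- (real n * e^2)))"
    using mgf[OF S, of n e] mgf[OF S, of n "-e"] by simp
  also have "\<dots> = ennreal (2 * exp (- (real n * e^2 / 2)))"
    by (simp add: ennreal_mult'[symmetric] ennreal_plus[symmetric] exp_add[symmetric] del: ennreal_plus)
  finally have "emeasure ?M ?E \<le> ennreal (2 * exp (- (real n * e^2 / 2)))" .
  thus ?thesis by (simp add: emeasure_eq_measure)
qed

lemma quad_id:
  "quadform d v (Sigma2 n \<delta> \<omega>) = 2 / real n * (\<Sum>k<d. v k * \<delta> k) * (\<Sum>i<n. snd \<omega> i * (\<Sum>j<d. v j * fst \<omega> i j))"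
proof -
  define z where "z = snd \<omega>"
  define y where "y = fst \<omega>"
  define c where "c = (\<Sum>k<d. v k * \<delta> k)"
  define A where "A = (\<lambda>i. \<Sum>j<d. v j * y i j)"
  define g where "g = (\<lambda>i j k. v j * (z i * (y i j * \<delta> k + \<delta> j * y i k)) * v k)"
  have "quadform d v (Sigma2 n \<delta> \<omega>) = (\<Sum>j<d. \<Sum>k<d. 1 / real n * (\<Sum>i<n. g i j k))"
    unfolding quadform_def Sigma2_def g_def z_def y_def
    by (intro sum.cong refl) (simp add: sum_distrib_left sum_distrib_right mult_ac)
  also have "\<dots> = 1 / real n * (\<Sum>j<d. \<Sum>k<d. \<Sum>i<n. g i j k)"
    by (simp add: sum_distrib_left)
  also have "(\<Sum>j<d. \<Sum>k<d. \<Sum>i<n. g i j k) = (\<Sum>j<d. \<Sum>i<n. \<Sum>k<d. g i j k)"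
    by (intro sum.cong refl sum.swap)
  also have "\<dots> = (\<Sum>i<n. \<Sum>j<d. \<Sum>k<d. g i j k)"
    by (rule sum.swap)
  also have "\<dots> = (\<Sum>i<n. 2 * c * (z i * A i))"
  proof (intro sum.cong refl)
    fix i
    have "(\<Sum>j<d. \<Sum>k<d. g i j k) = z i * ((\<Sum>j<d. \<Sum>k<d. (v j * y i j) * (v k * \<delta> k)) + (\<Sum>j<d. \<Sum>k<d. (v j * \<delta> j) * (v k * y i k)))"
      unfolding g_def by (simp add: sum_distrib_left sum.distrib[symmetric] algebra_simps)
    also have "\<dots> = z i * (A i * c + c * A i)"
      unfolding A_def c_def by (simp add: sum_product)
    finally show "(\<Sum>j<d. \<Sum>k<d. g i j k) = 2 * c * (z i * A i)" by simp
  qed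
  finally show ?thesis
    unfolding c_def[symmetric] A_def z_def y_def by (simp add: sum_distrib_left[symmetric] mult_ac)
qed

theorem lemma8:
  shows "\<exists>(C::real) (k::nat) (K::real) (a::real). C > 0 \<and> K > 0 \<and> a > 0 \<and>
    (\<forall>(d::nat) (\<epsilon>::real) (\<delta>::nat \<Rightarrow> real). d \<ge> 1 \<and> \<epsilon> > 0 \<and> vnorm d \<delta> \<le> \<epsilon> \<longrightarrow>
      (\<exists>n::nat. n \<ge> 1 \<and>
         real n \<le> C * (1 + real d / \<epsilon>\<^sup>2) * (1 + ln (1 + real d / \<epsilon>\<^sup>2)) ^ k \<and>
         (\<forall>v::nat \<Rightarrow> real. vnorm d v = 1 \<longrightarrow>
            measure (sample_space d n)
              {\<omega> \<in> space (sample_space d n). \<bar>quadform d v (Sigma2 n \<delta> \<omega>)\<bar> > 2 * \<epsilon>\<^sup>2}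
            \<le> K * (\<epsilon>\<^sup>2 / real d) powr a)))"
proof (rule exI[of _ "3::real"], rule exI[of _ "1::nat"], rule exI[of _ "2::real"], rule exI[of _ "1::real"],
       intro conjI allI impI)
  fix d :: nat and \<epsilon> :: real and \<delta> :: "nat \<Rightarrow> real"
  assume H: "d \<ge> 1 \<and> \<epsilon> > 0 \<and> vnorm d \<delta> \<le> \<epsilon>"
  hence d1: "real d \<ge> 1" and ep: "\<epsilon> > 0" and dn: "vnorm d \<delta> \<le> \<epsilon>" by auto
  define u where "u = real d / \<epsilon>^2"
  have u0: "u > 0" unfolding u_def using d1 ep by simp
  define B where "B = (1 + u) * (1 + ln (1 + u))"
  have L0: "ln (1 + u) \<ge> 0" using u0 by simp
  have B1: "B \<ge> 1" unfolding B_def using u0 L0 mult_mono[of 1 "1+u" 1 "1 + ln (1+u)"] by simp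
  define n where "n = nat \<lceil>2 * B\<rceil>"
  have nB: "real n \<ge> 2 * B" unfolding n_def by linarith
  have nB2: "real n \<le> 2 * B + 1" unfolding n_def using B1 by linarith
  show "\<exists>n::nat. n \<ge> 1 \<and> real n \<le> 3 * (1 + real d / \<epsilon>\<^sup>2) * (1 + ln (1 + real d / \<epsilon>\<^sup>2)) ^ 1 \<and>
         (\<forall>v::nat \<Rightarrow> real. vnorm d v = 1 \<longrightarrow>
            measure (sample_space d n)
              {\<omega> \<in> space (sample_space d n). \<bar>quadform d v (Sigma2 n \<delta> \<omega>)\<bar> > 2 * \<epsilon>\<^sup>2}
            \<le> 2 * (\<epsilon>\<^sup>2 / real d) powr 1)"
  proof (rule exI[of _ n], intro conjI allI impI)
    show "n \<ge> 1" using nB B1 by linarith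
    show "real n \<le> 3 * (1 + real d / \<epsilon>\<^sup>2) * (1 + ln (1 + real d / \<epsilon>\<^sup>2)) ^ 1"
    proof -
      have "real n \<le> 3 * B" using nB2 B1 by linarith
      thus ?thesis unfolding B_def u_def by (simp only: power_one_right mult.assoc)
    qed
  next
    fix v :: "nat \<Rightarrow> real"
    assume v1: "vnorm d v = 1"
    have S: "(\<Sum>j<d. (v j)^2) = 1"
      using v1 unfolding vnorm_def by simp
    have Sd: "(\<Sum>j<d. (\<delta> j)^2) \<le> \<epsilon>^2"
    proof -
      have nn: "(\<Sum>j<d. (\<delta> j)^2) \<ge> 0" by (simp add: sum_nonneg)
      have "sqrt (\<Sum>j<d. (\<delta> j)^2) \<le> \<epsilon>" using dn unfolding vnorm_def .
      hence "(sqrt (\<Sum>j<d. (\<delta> j)^2))^2 \<le> \<epsilon>^2" by (intro power_mono) (auto simp: sum_nonneg)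
      thus ?thesis using nn by simp
    qed
    define c where "c = (\<Sum>k<d. v k * \<delta> k)"
    have "c^2 \<le> 1 * \<epsilon>^2"
      unfolding c_def using Cauchy_Schwarz_ineq_sum[of v \<delta> "{..<d}"] S Sd by simp
    hence cle: "\<bar>c\<bar> \<le> \<epsilon>" using ep by (simp add: abs_le_square_iff real_le_rsqrt power2_le_iff_abs_le)
    let ?X = "\<lambda>\<omega>. \<Sum>i<n. snd \<omega> i * (\<Sum>j<d. v j * fst \<omega> i j)"
    have npos: "real n > 0" using nB B1 by linarith
    have sub: "{\<omega> \<in> space (sample_space d n). \<bar>quadform d v (Sigma2 n \<delta> \<omega>)\<bar> > 2 * \<epsilon>\<^sup>2}
       \<subseteq> {\<omega> \<in> space (sample_space d n). \<bar>?X \<omega>\<bar> > real n * \<epsilon>}"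
    proof (safe)
      fix \<omega> assume "\<bar>quadform d v (Sigma2 n \<delta> \<omega>)\<bar> > 2 * \<epsilon>\<^sup>2"
      hence *: "2 / real n * \<bar>c\<bar> * \<bar>?X \<omega>\<bar> > 2 * \<epsilon>^2"
        unfolding quad_id c_def[symmetric] using npos by (simp add: abs_mult)
      show "\<bar>?X \<omega>\<bar> > real n * \<epsilon>"
      proof (rule ccontr)
        assume "\<not> \<bar>?X \<omega>\<bar> > real n * \<epsilon>"
        hence "\<bar>?X \<omega>\<bar> \<le> real n * \<epsilon>" by simp
        hence "\<bar>c\<bar> * \<bar>?X \<omega>\<bar> \<le> \<epsilon> * (real n * \<epsilon>)"
          using cle by (intro mult_mono) auto
        hence "2 / real n * (\<bar>c\<bar> * \<bar>?X \<omega>\<bar>) \<le> 2 / real n * (\<epsilon> * (real n * \<epsilon>))"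
          using npos by (intro mult_left_mono) auto
        thus False using * npos by (simp add: power2_eq_square field_simps)
      qed
    qed
    interpret prob_space "sample_space d n" by (rule prob_sample)
    have Xm: "?X \<in> borel_measurable (sample_space d n)" unfolding sample_space_def by (rule meas_X)
    have "measure (sample_space d n)
              {\<omega> \<in> space (sample_space d n). \<bar>quadform d v (Sigma2 n \<delta> \<omega>)\<bar> > 2 * \<epsilon>\<^sup>2}
          \<le> measure (sample_space d n) {\<omega> \<in> space (sample_space d n). \<bar>?X \<omega>\<bar> > real n * \<epsilon>}"
      by (rule finite_measure_mono[OF sub]) (use Xm in measurable)
    also have "\<dots> \<le> 2 * exp (- (real n * \<epsilon>^2 / 2))" by (rule tail[OF S ep])
    also have "exp (- (real n * \<epsilon>^2 / 2)) \<le> \<epsilon>^2 / real d"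
    proof -
      have "real n * \<epsilon>^2 / 2 \<ge> B * \<epsilon>^2" using nB ep by (simp add: field_simps)
      also have "B * \<epsilon>^2 = (\<epsilon>^2 + real d) * (1 + ln (1 + u))"
        unfolding B_def u_def using ep by (simp add: field_simps)
      also have "\<dots> \<ge> ln (1 + u)"
      proof -
        have "(\<epsilon>^2 + real d) \<ge> 1" using d1 by (simp add: add_increasing)
        thus ?thesis using L0 mult_mono[of 1 "\<epsilon>^2 + real d" "ln (1+u)" "1 + ln (1+u)"] by simp
      qed
      finally have "exp (- (real n * \<epsilon>^2 / 2)) \<le> exp (- ln (1 + u))" by simp
      also have "\<dots> = 1 / (1 + u)" using u0 by (simp add: exp_minus inverse_eq_divide)
      also have "\<dots> \<le> 1 / u" using u0 by (simp add: frac_le)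
      also have "\<dots> = \<epsilon>^2 / real d" unfolding u_def by simp
      finally show ?thesis .
    qed
    hence "2 * exp (- (real n * \<epsilon>^2 / 2)) \<le> 2 * (\<epsilon>^2 / real d)" by simp
    also have "\<epsilon>^2 / real d = (\<epsilon>\<^sup>2 / real d) powr 1" using ep d1 by simp
    finally show "measure (sample_space d n)
              {\<omega> \<in> space (sample_space d n). \<bar>quadform d v (Sigma2 n \<delta> \<omega>)\<bar> > 2 * \<epsilon>\<^sup>2}
            \<le> 2 * (\<epsilon>\<^sup>2 / real d) powr 1" by simp
  qed
qed auto

end
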